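(* Let $k$ be any field and $d$ a positive integer. Then $d\,S_{d+1}(x_1,\ldots,x_{d+1})\in R_1^{(d)}$.
   Context: $X=\{x_1,x_2,\ldots\}$ is a countably infinite set and $k_0\langle X\rangle$ is the free associative $k$-algebra (without identity) on $X$. A $T$-space is a $k$-linear subspace closed under every algebra endomorphism of $k_0\langle X\rangle$; the $T$-space generated by a subset is the smallest $T$-space containing it. $S_d(v_1,\ldots,v_d)=\sum_{\sigma\in\Sigma_d}\prod_{i=1}^d v_{\sigma(i)}$, and $R_1^{(d)}$ is the $T$-space generated by $S_d(x_1,\ldots,x_d)$. *)

theory Defs
  imports "HOL-Combinatorics.Permutations"
begin

text \<open>The free associative algebra without identity over the field 'k on variables
  x_0, x_1, ... (indexed by nat): elements are finitely supported coefficient functions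
  on words (nat lists) with zero coefficient on the empty word.\<close>

definition FA :: "(nat list \<Rightarrow> 'k::field) set" where
  "FA = {p. finite {w. p w \<noteq> 0} \<and> p [] = 0}"

definition padd :: "(nat list \<Rightarrow> 'k::field) \<Rightarrow> (nat list \<Rightarrow> 'k) \<Rightarrow> nat list \<Rightarrow> 'k" where
  "padd p q = (\<lambda>w. p w + q w)"

definition psmult :: "'k::field \<Rightarrow> (nat list \<Rightarrow> 'k) \<Rightarrow> nat list \<Rightarrow> 'k" where
  "psmult c p = (\<lambda>w. c * p w)"

definition pmult :: "(nat list \<Rightarrow> 'k::field) \<Rightarrow> (nat list \<Rightarrow> 'k) \<Rightarrow> nat list \<Rightarrow> 'k" where
  "pmult p q = (\<lambda>w. \<Sum>i\<le>length w. p (take i w) * q (drop i w))"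

fun mprod :: "(nat list \<Rightarrow> 'k::field) list \<Rightarrow> nat list \<Rightarrow> 'k" where
  "mprod [] = (\<lambda>_. 0)"
| "mprod [p] = p"
| "mprod (p # ps) = pmult p (mprod ps)"

definition Xv :: "nat \<Rightarrow> nat list \<Rightarrow> 'k::field" where
  "Xv i = (\<lambda>w. if w = [i] then 1 else 0)"

definition alg_endo :: "((nat list \<Rightarrow> 'k::field) \<Rightarrow> (nat list \<Rightarrow> 'k)) \<Rightarrow> bool" where
  "alg_endo \<phi> \<longleftrightarrow>
     (\<forall>p\<in>FA. \<phi> p \<in> FA) \<and>
     (\<forall>p\<in>FA. \<forall>q\<in>FA. \<phi> (padd p q) = padd (\<phi> p) (\<phi> q)) \<and>
     (\<forall>c. \<forall>p\<in>FA. \<phi> (psmult c p) = psmult c (\<phi> p)) \<and>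
     (\<forall>p\<in>FA. \<forall>q\<in>FA. \<phi> (pmult p q) = pmult (\<phi> p) (\<phi> q))"

definition tspace :: "(nat list \<Rightarrow> 'k::field) set \<Rightarrow> bool" where
  "tspace V \<longleftrightarrow>
     V \<subseteq> FA \<and> (\<lambda>_. 0) \<in> V \<and>
     (\<forall>p\<in>V. \<forall>q\<in>V. padd p q \<in> V) \<and>
     (\<forall>c. \<forall>p\<in>V. psmult c p \<in> V) \<and>
     (\<forall>\<phi>. alg_endo \<phi> \<longrightarrow> (\<forall>p\<in>V. \<phi> p \<in> V))"

definition tspace_gen :: "(nat list \<Rightarrow> 'k::field) set \<Rightarrow> (nat list \<Rightarrow> 'k) set" where
  "tspace_gen S = \<Inter>{V. tspace V \<and> S \<subseteq> V}"

text \<open>S_d(v_1,...,v_d) = sum over permutations sigma of the product v_sigma(1) ... v_sigma(d);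
  here the arguments are indexed 0..d-1.\<close>
definition symS :: "nat \<Rightarrow> (nat \<Rightarrow> nat list \<Rightarrow> 'k::field) \<Rightarrow> nat list \<Rightarrow> 'k" where
  "symS d v = (\<lambda>w. \<Sum>\<sigma>\<in>{\<sigma>. \<sigma> permutes {0..<d}}. mprod (map (\<lambda>i. v (\<sigma> i)) [0..<d]) w)"

end

theory Submission
  imports Defs
begin


definition supp :: "(nat list \<Rightarrow> 'k::field) \<Rightarrow> nat list set" where
  "supp p = {w. p w \<noteq> 0}"

definition conc :: "(nat \<Rightarrow> nat list) \<Rightarrow> nat list \<Rightarrow> nat list" where
  "conc s u = concat (map s u)"

definition subst :: "(nat \<Rightarrow> nat list) \<Rightarrow> (nat list \<Rightarrow> 'k::field) \<Rightarrow> nat list \<Rightarrow> 'k" where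
  "subst s p = (\<lambda>w. \<Sum>u\<in>{u. p u \<noteq> 0 \<and> conc s u = w}. p u)"

lemma conc_append[simp]: "conc s (u @ v) = conc s u @ conc s v"
  by (simp add: conc_def)

lemma conc_Nil_iff: "\<forall>i. s i \<noteq> [] \<Longrightarrow> conc s u = [] \<longleftrightarrow> u = []"
  by (cases u) (auto simp: conc_def)

lemma subst_sum:
  assumes "finite U" "supp p \<subseteq> U"
  shows "subst s p w = (\<Sum>u\<in>U. if conc s u = w then p u else 0)"
proof -
  have "(\<Sum>u\<in>U. if conc s u = w then p u else 0) = (\<Sum>u\<in>{u\<in>U. conc s u = w}. p u)"
    by (simp add: sum.inter_filter assms)
  also have "\<dots> = (\<Sum>u\<in>{u. p u \<noteq> 0 \<and> conc s u = w}. p u)"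
    by (rule sum.mono_neutral_right) (use assms in \<open>auto simp: supp_def\<close>)
  finally show ?thesis by (simp add: subst_def)
qed

lemma FA_supp: "p \<in> FA \<Longrightarrow> finite (supp p)"
  by (simp add: FA_def supp_def)

lemma pmult_sum:
  assumes "finite A" "finite B" "supp p \<subseteq> A" "supp q \<subseteq> B"
  shows "pmult p q w = (\<Sum>x\<in>A \<times> B. if fst x @ snd x = w then p (fst x) * q (snd x) else 0)"
proof -
  define D where "D = (\<lambda>i. (take i w, drop i w)) ` {..length w}"
  have inj: "inj_on (\<lambda>i. (take i w, drop i w)) {..length w}"
    by (auto simp: inj_on_def) (metis length_take min.absorb2)
  have Deq: "D = {x. fst x @ snd x = w}"
  proof
    show "D \<subseteq> {x. fst x @ snd x = w}" by (auto simp: D_def)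
    show "{x. fst x @ snd x = w} \<subseteq> D"
    proof
      fix x assume "x \<in> {x. fst x @ snd x = w}"
      then have "x = (take (length (fst x)) w, drop (length (fst x)) w)" "length (fst x) \<le> length w"
        by (auto simp: prod_eq_iff)
      then show "x \<in> D" unfolding D_def by blast
    qed
  qed
  have "pmult p q w = (\<Sum>x\<in>D. p (fst x) * q (snd x))"
    unfolding pmult_def D_def by (simp add: sum.reindex[OF inj])
  also have "\<dots> = (\<Sum>x\<in>D \<inter> (A \<times> B). p (fst x) * q (snd x))"
    by (rule sum.mono_neutral_right) (use assms in \<open>auto simp: D_def supp_def\<close>)
  also have "\<dots> = (\<Sum>x\<in>A \<times> B. if fst x @ snd x = w then p (fst x) * q (snd x) else 0)"
    by (simp add: sum.inter_filter assms Deq Int_commute Collect_conj_eq[symmetric] Int_def)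
  finally show ?thesis .
qed


lemma subst_FA:
  assumes ne: "\<forall>i. s i \<noteq> []" and p: "p \<in> FA"
  shows "subst s p \<in> FA"
proof -
  have "{w. subst s p w \<noteq> 0} \<subseteq> conc s ` supp p"
  proof
    fix w assume "w \<in> {w. subst s p w \<noteq> 0}"
    then have nz: "subst s p w \<noteq> 0" by simp
    have "{u. p u \<noteq> 0 \<and> conc s u = w} \<noteq> {}"
    proof
      assume e: "{u. p u \<noteq> 0 \<and> conc s u = w} = {}"
      have "subst s p w = 0" unfolding subst_def by (simp only: e sum.empty)
      with nz show False by simp
    qed
    then show "w \<in> conc s ` supp p" by (auto simp: supp_def)
  qed
  moreover have "finite (conc s ` supp p)" using FA_supp[OF p] by simp
  ultimately have "finite {w. subst s p w \<noteq> 0}" by (rule finite_subset)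
  moreover have e: "{u. p u \<noteq> 0 \<and> conc s u = []} = {}"
    using p conc_Nil_iff[OF ne] by (auto simp: FA_def)
  have "subst s p [] = 0" unfolding subst_def by (simp only: e sum.empty)
  ultimately show ?thesis by (simp add: FA_def)
qed

lemma supp_subst: "p \<in> FA \<Longrightarrow> supp (subst s p) \<subseteq> conc s ` supp p"
proof
  fix w assume "p \<in> FA" "w \<in> supp (subst s p)"
  then have nz: "subst s p w \<noteq> 0" by (simp add: supp_def)
  have "{u. p u \<noteq> 0 \<and> conc s u = w} \<noteq> {}"
  proof
    assume e: "{u. p u \<noteq> 0 \<and> conc s u = w} = {}"
    have "subst s p w = 0" unfolding subst_def by (simp only: e sum.empty)
    with nz show False by simp
  qed
  then show "w \<in> conc s ` supp p" by (auto simp: supp_def)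
qed

lemma supp_pmult: "p \<in> FA \<Longrightarrow> q \<in> FA \<Longrightarrow>
   supp (pmult p q) \<subseteq> (\<lambda>x. fst x @ snd x) ` (supp p \<times> supp q)"
proof
  fix w assume p: "p \<in> FA" and q: "q \<in> FA" and w: "w \<in> supp (pmult p q)"
  have "pmult p q w = (\<Sum>x\<in>supp p \<times> supp q. if fst x @ snd x = w then p (fst x) * q (snd x) else 0)"
    by (rule pmult_sum) (auto simp: FA_supp p q)
  with w have "(\<Sum>x\<in>supp p \<times> supp q. if fst x @ snd x = w then p (fst x) * q (snd x) else 0) \<noteq> 0"
    by (simp add: supp_def)
  then obtain x where "x \<in> supp p \<times> supp q" "(if fst x @ snd x = w then p (fst x) * q (snd x) else 0) \<noteq> 0"
    by (rule sum.not_neutral_contains_not_neutral) assumption+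
  then have "x \<in> supp p \<times> supp q" "fst x @ snd x = w" by (auto split: if_splits)
  then show "w \<in> (\<lambda>x. fst x @ snd x) ` (supp p \<times> supp q)" by blast
qed

lemma subst_mult:
  assumes ne: "\<forall>i. s i \<noteq> []" and p: "p \<in> FA" and q: "q \<in> FA"
  shows "subst s (pmult p q) = pmult (subst s p) (subst s q)"
proof
  fix w
  define A where "A = supp p"
  define B where "B = supp q"
  have fA: "finite A" and fB: "finite B" using p q by (auto simp: A_def B_def FA_supp)
  define M where "M = (\<lambda>x. fst x @ snd x) ` (A \<times> B)"
  have fM: "finite M" using fA fB by (simp add: M_def)
  let ?T = "\<Sum>x\<in>A \<times> B. if conc s (fst x) @ conc s (snd x) = w then p (fst x) * q (snd x) else 0"
  have pm: "pmult p q x = (\<Sum>y\<in>A \<times> B. if fst y @ snd y = x then p (fst y) * q (snd y) else 0)" for x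
    by (rule pmult_sum[OF fA fB]) (auto simp: A_def B_def)
  have "subst s (pmult p q) w = (\<Sum>x\<in>M. if conc s x = w then pmult p q x else 0)"
    by (rule subst_sum) (use supp_pmult[OF p q] fM in \<open>auto simp: M_def A_def B_def\<close>)
  also have "\<dots> = (\<Sum>x\<in>M. \<Sum>y\<in>A \<times> B. if x = fst y @ snd y then (if conc s x = w then p (fst y) * q (snd y) else 0) else 0)"
  proof (rule sum.cong[OF refl])
    fix x
    have pm': "pmult p q x = (\<Sum>y\<in>A \<times> B. if x = fst y @ snd y then p (fst y) * q (snd y) else 0)"
      unfolding pm by (rule sum.cong) auto
    show "(if conc s x = w then pmult p q x else 0) = (\<Sum>y\<in>A \<times> B. if x = fst y @ snd y then (if conc s x = w then p (fst y) * q (snd y) else 0) else 0)"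
    proof (cases "conc s x = w")
      case True show ?thesis by (simp only: pm' True simp_thms(6) if_True)
    next
      case False show ?thesis by (simp only: False if_False if_cancel sum.neutral_const)
    qed
  qed
  also have "\<dots> = (\<Sum>y\<in>A \<times> B. \<Sum>x\<in>M. if x = fst y @ snd y then (if conc s x = w then p (fst y) * q (snd y) else 0) else 0)"
    by (rule sum.swap)
  also have "\<dots> = ?T"
  proof (rule sum.cong[OF refl])
    fix y assume y: "y \<in> A \<times> B"
    have "fst y @ snd y \<in> M" using y by (auto simp: M_def)
    then show "(\<Sum>x\<in>M. if x = fst y @ snd y then (if conc s x = w then p (fst y) * q (snd y) else 0) else 0) =
       (if conc s (fst y) @ conc s (snd y) = w then p (fst y) * q (snd y) else 0)"
      by (subst sum.delta[OF fM]) simp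
  qed
  finally have L: "subst s (pmult p q) w = ?T" .
  define A' where "A' = conc s ` A"
  define B' where "B' = conc s ` B"
  have fA': "finite A'" and fB': "finite B'" using fA fB by (auto simp: A'_def B'_def)
  have sp: "subst s p u = (\<Sum>x\<in>A. if conc s x = u then p x else 0)" for u
    by (rule subst_sum[OF fA]) (auto simp: A_def)
  have sq: "subst s q u = (\<Sum>x\<in>B. if conc s x = u then q x else 0)" for u
    by (rule subst_sum[OF fB]) (auto simp: B_def)
  have "pmult (subst s p) (subst s q) w = (\<Sum>z\<in>A' \<times> B'. if fst z @ snd z = w then subst s p (fst z) * subst s q (snd z) else 0)"
    by (rule pmult_sum) (use supp_subst[OF p] supp_subst[OF q] fA' fB' in \<open>auto simp: A'_def B'_def A_def B_def\<close>)
  also have "\<dots> = (\<Sum>z\<in>A' \<times> B'. \<Sum>y\<in>A \<times> B. if z = (conc s (fst y), conc s (snd y)) then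
          (if conc s (fst y) @ conc s (snd y) = w then p (fst y) * q (snd y) else 0) else 0)"
  proof (rule sum.cong[OF refl])
    fix z assume "z \<in> A' \<times> B'"
    show "(if fst z @ snd z = w then subst s p (fst z) * subst s q (snd z) else 0) =
      (\<Sum>y\<in>A \<times> B. if z = (conc s (fst y), conc s (snd y)) then
          (if conc s (fst y) @ conc s (snd y) = w then p (fst y) * q (snd y) else 0) else 0)"
    proof (cases z)
      case (Pair z1 z2)
      have "subst s p z1 * subst s q z2 = (\<Sum>x\<in>A. \<Sum>y\<in>B. (if conc s x = z1 then p x else 0) * (if conc s y = z2 then q y else 0))"
        unfolding sp sq by (rule sum_product)
      also have "\<dots> = (\<Sum>y\<in>A \<times> B. (if conc s (fst y) = z1 then p (fst y) else 0) * (if conc s (snd y) = z2 then q (snd y) else 0))"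
        by (simp add: sum.cartesian_product split_def)
      finally have e: "subst s p z1 * subst s q z2 = \<dots>" .
      show ?thesis
      proof (cases "z1 @ z2 = w")
        case True
        then show ?thesis unfolding Pair by (simp add: e) (rule sum.cong, auto)
      next
        case False
        then show ?thesis unfolding Pair by (simp, intro sum.neutral ballI) auto
      qed
    qed
  qed
  also have "\<dots> = (\<Sum>y\<in>A \<times> B. \<Sum>z\<in>A' \<times> B'. if z = (conc s (fst y), conc s (snd y)) then
          (if conc s (fst y) @ conc s (snd y) = w then p (fst y) * q (snd y) else 0) else 0)"
    by (rule sum.swap)
  also have "\<dots> = ?T"
  proof (rule sum.cong[OF refl])
    fix y assume y: "y \<in> A \<times> B"
    have "(conc s (fst y), conc s (snd y)) \<in> A' \<times> B'" using y by (auto simp: A'_def B'_def)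
    then show "(\<Sum>z\<in>A' \<times> B'. if z = (conc s (fst y), conc s (snd y)) then
          (if conc s (fst y) @ conc s (snd y) = w then p (fst y) * q (snd y) else 0) else 0) =
       (if conc s (fst y) @ conc s (snd y) = w then p (fst y) * q (snd y) else 0)"
      by (subst sum.delta) (use fA' fB' in auto)
  qed
  finally show "subst s (pmult p q) w = pmult (subst s p) (subst s q) w" using L by simp
qed

lemma subst_endo:
  assumes ne: "\<forall>i. s i \<noteq> []"
  shows "alg_endo (subst s :: (nat list \<Rightarrow> 'k::field) \<Rightarrow> _)"
  unfolding alg_endo_def
proof (intro conjI ballI allI)
  fix p :: "nat list \<Rightarrow> 'k" assume p: "p \<in> FA"
  show "subst s p \<in> FA" by (rule subst_FA[OF ne p])
  fix c :: 'k
  show "subst s (psmult c p) = psmult c (subst s p)"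
  proof
    fix w
    have "subst s (psmult c p) w = (\<Sum>u\<in>supp p. if conc s u = w then psmult c p u else 0)"
      by (rule subst_sum[OF FA_supp[OF p]]) (auto simp: supp_def psmult_def)
    also have "\<dots> = c * (\<Sum>u\<in>supp p. if conc s u = w then p u else 0)"
      by (simp add: sum_distrib_left psmult_def if_distrib cong: if_cong)
    also have "\<dots> = psmult c (subst s p) w"
      by (simp add: psmult_def subst_sum[of "supp p" p, OF FA_supp[OF p]])
    finally show "subst s (psmult c p) w = psmult c (subst s p) w" .
  qed
next
  fix p q :: "nat list \<Rightarrow> 'k" assume p: "p \<in> FA" and q: "q \<in> FA"
  show "subst s (pmult p q) = pmult (subst s p) (subst s q)" by (rule subst_mult[OF ne p q])
  show "subst s (padd p q) = padd (subst s p) (subst s q)"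
  proof
    fix w
    let ?U = "supp p \<union> supp q"
    have f: "finite ?U" using p q by (simp add: FA_supp)
    have "subst s (padd p q) w = (\<Sum>u\<in>?U. if conc s u = w then padd p q u else 0)"
      by (rule subst_sum[OF f]) (auto simp: supp_def padd_def)
    also have "\<dots> = (\<Sum>u\<in>?U. if conc s u = w then p u else 0) + (\<Sum>u\<in>?U. if conc s u = w then q u else 0)"
      by (auto simp: sum.distrib[symmetric] padd_def intro!: sum.cong)
    also have "\<dots> = padd (subst s p) (subst s q) w"
      by (simp add: padd_def subst_sum[of ?U p, OF f] subst_sum[of ?U q, OF f])
    finally show "subst s (padd p q) w = padd (subst s p) (subst s q) w" .
  qed
qed



definition PW :: "nat \<Rightarrow> nat list set" where
  "PW n = {w. distinct w \<and> set w = {0..<n}}"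

lemma PW_iff: "w \<in> PW n \<longleftrightarrow> distinct w \<and> length w = n \<and> set w \<subseteq> {0..<n}"
proof
  assume "w \<in> PW n" then show "distinct w \<and> length w = n \<and> set w \<subseteq> {0..<n}"
    by (auto simp: PW_def dest: distinct_card)
next
  assume h: "distinct w \<and> length w = n \<and> set w \<subseteq> {0..<n}"
  then have "card (set w) = card {0..<n}" by (simp add: distinct_card)
  then have "set w = {0..<n}" using h card_subset_eq by blast
  with h show "w \<in> PW n" by (simp add: PW_def)
qed

lemma finite_PW: "finite (PW n)"
proof (rule finite_subset[OF _ finite_lists_length_eq[of "{0..<n}" n]])
  show "PW n \<subseteq> {xs. set xs \<subseteq> {0..<n} \<and> length xs = n}" using PW_iff by blast
qed simp

lemma mprod_Xv: "l \<noteq> [] \<Longrightarrow> mprod (map Xv l) = (\<lambda>w. if w = l then (1::'k::field) else 0)"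
proof (induction l rule: induct_list012)
  case (2 x) then show ?case by (auto simp: Xv_def)
next
  case (3 x y zs)
  have IH: "mprod (map Xv (y # zs)) = (\<lambda>w. if w = y # zs then (1::'k) else 0)" using 3 by simp
  show ?case
  proof
    fix w
    have "mprod (map Xv (x # y # zs)) w = pmult (Xv x) (\<lambda>w. if w = y # zs then (1::'k) else 0) w"
      using IH by simp
    also have "\<dots> = (\<Sum>z\<in>{[x]} \<times> {y # zs}. if fst z @ snd z = w then Xv x (fst z) * (if snd z = y # zs then (1::'k) else 0) else 0)"
      by (rule pmult_sum) (auto simp: supp_def Xv_def)
    also have "\<dots> = (if w = x # y # zs then (1::'k) else 0)" by (auto simp: Xv_def)
    finally show "mprod (map Xv (x # y # zs)) w = (if w = x # y # zs then (1::'k) else 0)" .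
  qed
qed simp

lemma symS_Xv:
  assumes "n \<ge> 1"
  shows "symS n (Xv :: nat \<Rightarrow> nat list \<Rightarrow> 'k::field) = (\<lambda>w. if w \<in> PW n then 1 else 0)"
proof
  fix w
  let ?P = "{\<sigma>. \<sigma> permutes {0..<n}}"
  have fP: "finite ?P" by (simp add: finite_permutations)
  have "symS n (Xv :: nat \<Rightarrow> nat list \<Rightarrow> 'k) w = (\<Sum>\<sigma>\<in>?P. if w = map \<sigma> [0..<n] then 1 else 0)"
    unfolding symS_def
  proof (rule sum.cong[OF refl])
    fix \<sigma>
    have "map (\<lambda>i. Xv (\<sigma> i)) [0..<n] = map Xv (map \<sigma> [0..<n])" by simp
    moreover have "map \<sigma> [0..<n] \<noteq> []" using assms by simp
    ultimately show "mprod (map (\<lambda>i. Xv (\<sigma> i)) [0..<n]) w = (if w = map \<sigma> [0..<n] then (1::'k) else 0)"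
      using mprod_Xv by metis
  qed
  also have "\<dots> = (if w \<in> PW n then 1 else 0)"
  proof (cases "w \<in> PW n")
    case True
    then have w: "distinct w" "length w = n" "set w \<subseteq> {0..<n}" by (auto simp: PW_iff)
    define \<sigma>0 where "\<sigma>0 = (\<lambda>i. if i < n then w ! i else i)"
    have "\<sigma>0 permutes {0..<n}"
    proof (rule inj_imp_permutes)
      show "inj_on \<sigma>0 {0..<n}" using w by (auto simp: inj_on_def \<sigma>0_def nth_eq_iff_index_eq)
      show "\<sigma>0 x \<in> {0..<n}" if "x \<in> {0..<n}" for x using that w nth_mem by (fastforce simp: \<sigma>0_def)
    qed (auto simp: \<sigma>0_def)
    have eq: "(w = map \<sigma> [0..<n]) \<longleftrightarrow> \<sigma> = \<sigma>0" if "\<sigma> \<in> ?P" for \<sigma>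
    proof
      assume "w = map \<sigma> [0..<n]"
      then show "\<sigma> = \<sigma>0" using that by (auto simp: \<sigma>0_def permutes_def fun_eq_iff)
    next
      assume "\<sigma> = \<sigma>0"
      then show "w = map \<sigma> [0..<n]" using w by (auto simp: \<sigma>0_def intro: nth_equalityI)
    qed
    have "(\<Sum>\<sigma>\<in>?P. if w = map \<sigma> [0..<n] then (1::'k) else 0) = (\<Sum>\<sigma>\<in>?P. if \<sigma> = \<sigma>0 then 1 else 0)"
      by (rule sum.cong) (auto simp: eq)
    also have "\<dots> = 1" using \<open>\<sigma>0 permutes {0..<n}\<close> fP by (simp add: sum.delta')
    finally show ?thesis using True by simp
  next
    case False
    have "w \<noteq> map \<sigma> [0..<n]" if "\<sigma> \<in> ?P" for \<sigma>
    proof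
      assume w: "w = map \<sigma> [0..<n]"
      have "distinct w" using that w by (auto simp: distinct_map permutes_inj_on)
      moreover have "set w = {0..<n}" using that w by (auto simp: permutes_image)
      ultimately show False using False by (simp add: PW_def)
    qed
    then show ?thesis using False by simp
  qed
  finally show "symS n (Xv :: nat \<Rightarrow> nat list \<Rightarrow> 'k) w = (if w \<in> PW n then 1 else 0)" .
qed



definition rl :: "nat \<Rightarrow> nat \<Rightarrow> nat \<Rightarrow> nat list" where
  "rl d a b = filter (\<lambda>x. x \<noteq> a \<and> x \<noteq> b) [0..<Suc d]"

definition sab :: "nat \<Rightarrow> nat \<Rightarrow> nat \<Rightarrow> nat \<Rightarrow> nat list" where
  "sab d a b i = (if i < d - 1 then [rl d a b ! i] else [a, b])"

definition adj :: "nat \<Rightarrow> nat \<Rightarrow> nat list \<Rightarrow> bool" where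
  "adj a b w \<longleftrightarrow> (\<exists>w1 w2. w = w1 @ [a, b] @ w2)"

context
  fixes d a b :: nat
  assumes d1: "d \<ge> 1" and ad: "a < Suc d" and bd: "b < Suc d" and ab: "a \<noteq> b"
begin

lemma rl_distinct: "distinct (rl d a b)"
  by (simp add: rl_def)

lemma rl_set: "set (rl d a b) = {0..<Suc d} - {a, b}"
  by (auto simp: rl_def)

lemma rl_length: "length (rl d a b) = d - 1"
proof -
  have "length (rl d a b) = card (set (rl d a b))" by (simp add: distinct_card rl_distinct)
  also have "\<dots> = card ({0..<Suc d} - {a, b})" by (simp add: rl_set)
  also have "\<dots> = Suc d - 2" using ad bd ab by (subst card_Diff_subset) auto
  finally show ?thesis by simp
qed

lemma sab_ne: "\<forall>i. sab d a b i \<noteq> []"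
  by (simp add: sab_def)

lemma hd_sab_inj:
  assumes "i < d" "j < d" "hd (sab d a b i) = hd (sab d a b j)"
  shows "i = j"
proof -
  have ar: "a \<notin> set (rl d a b)" by (simp add: rl_set)
  show ?thesis
  proof (cases "i < d - 1"; cases "j < d - 1")
    assume "i < d - 1" "j < d - 1"
    then show ?thesis using assms rl_distinct rl_length by (simp add: sab_def nth_eq_iff_index_eq)
  next
    assume "i < d - 1" "\<not> j < d - 1"
    then show ?thesis using assms ar rl_length nth_mem[of i "rl d a b"] by (simp add: sab_def)
  next
    assume "\<not> i < d - 1" "j < d - 1"
    then show ?thesis using assms ar rl_length nth_mem[of j "rl d a b"] by (simp add: sab_def)
  next
    assume "\<not> i < d - 1" "\<not> j < d - 1"
    then show ?thesis using assms by simp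
  qed
qed

lemma conc_inj:
  "set u \<subseteq> {0..<d} \<Longrightarrow> set v \<subseteq> {0..<d} \<Longrightarrow> conc (sab d a b) u = conc (sab d a b) v \<Longrightarrow> u = v"
proof (induction u arbitrary: v)
  case Nil
  then show ?case using conc_Nil_iff[OF sab_ne] by metis
next
  case (Cons x u)
  show ?case
  proof (cases v)
    case Nil
    then show ?thesis using Cons.prems conc_Nil_iff[OF sab_ne] by (metis list.distinct(1))
  next
    case (Cons y v')
    have e: "sab d a b x @ conc (sab d a b) u = sab d a b y @ conc (sab d a b) v'"
      using Cons.prems Cons by (simp add: conc_def)
    have "hd (sab d a b x) = hd (sab d a b y)"
      using e sab_ne by (metis hd_append2)
    then have "x = y" using hd_sab_inj Cons.prems Cons by auto
    then have "conc (sab d a b) u = conc (sab d a b) v'" using e by simp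
    then have "u = v'" using Cons.IH Cons.prems Cons by auto
    then show ?thesis using Cons \<open>x = y\<close> by simp
  qed
qed

lemma conc_small: "set u \<subseteq> {0..<d-1} \<Longrightarrow> conc (sab d a b) u = map (\<lambda>i. rl d a b ! i) u"
  by (induction u) (auto simp: conc_def sab_def)


lemma img_sub:
  assumes u: "u \<in> PW d"
  shows "conc (sab d a b) u \<in> PW (Suc d) \<and> adj a b (conc (sab d a b) u)"
proof -
  let ?r = "rl d a b" and ?s = "sab d a b"
  have ud: "distinct u" "length u = d" "set u \<subseteq> {0..<d}" using u by (auto simp: PW_iff)
  have "d - 1 \<in> set u" using u d1 by (auto simp: PW_def)
  then obtain u1 u2 where u12: "u = u1 @ (d - 1) # u2" by (meson split_list)
  have s1: "set u1 \<subseteq> {0..<d-1}" and s2: "set u2 \<subseteq> {0..<d-1}"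
    using ud u12 by (auto simp: subset_iff) (metis less_SucE Suc_pred' d1 less_le_trans zero_less_one)+
  have dis12: "set u1 \<inter> set u2 = {}" "distinct u1" "distinct u2" using ud u12 by auto
  have "?s (d - 1) = [a, b]" by (simp add: sab_def)
  then have c: "conc ?s u = map ((!) ?r) u1 @ [a, b] @ map ((!) ?r) u2"
    using u12 conc_small[OF s1] conc_small[OF s2] by (simp add: conc_def)
  have inj: "inj_on ((!) ?r) {0..<d-1}" by (rule inj_on_nth) (auto simp: rl_distinct rl_length)
  have ins: "(!) ?r ` {0..<d-1} \<subseteq> set ?r" using rl_length by auto
  have abr: "a \<notin> set ?r" "b \<notin> set ?r" by (auto simp: rl_set)
  have m1: "set (map ((!) ?r) u1) \<subseteq> set ?r" and m2: "set (map ((!) ?r) u2) \<subseteq> set ?r"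
    using s1 s2 ins by auto
  have dm1: "distinct (map ((!) ?r) u1)" using dis12 inj s1 by (simp add: distinct_map inj_on_subset)
  have dm2: "distinct (map ((!) ?r) u2)" using dis12 inj s2 by (simp add: distinct_map inj_on_subset)
  have dj: "set (map ((!) ?r) u1) \<inter> set (map ((!) ?r) u2) = {}"
  proof -
    have "(!) ?r ` set u1 \<inter> (!) ?r ` set u2 = (!) ?r ` (set u1 \<inter> set u2)"
      using inj s1 s2 by (simp add: inj_on_image_Int)
    then show ?thesis using dis12 by simp
  qed
  have "distinct (conc ?s u)" unfolding c using dm1 dm2 dj m1 m2 abr ab by auto
  moreover have "length (conc ?s u) = Suc d" unfolding c using ud u12 by simp
  moreover have "set (conc ?s u) \<subseteq> {0..<Suc d}" unfolding c using m1 m2 ad bd rl_set by auto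
  ultimately have "conc ?s u \<in> PW (Suc d)" by (simp add: PW_iff)
  moreover have "adj a b (conc ?s u)" unfolding c adj_def by blast
  ultimately show ?thesis by simp
qed


lemma img_sup:
  assumes w: "w \<in> PW (Suc d)" and adjw: "adj a b w"
  shows "\<exists>u\<in>PW d. conc (sab d a b) u = w"
proof -
  let ?r = "rl d a b" and ?s = "sab d a b"
  define idx where "idx = inv_into {..<length ?r} ((!) ?r)"
  have bij: "bij_betw ((!) ?r) {..<length ?r} (set ?r)" by (rule bij_betw_nth) (auto simp: rl_distinct)
  then have img: "(!) ?r ` {..<length ?r} = set ?r" by (simp add: bij_betw_def)
  have idx_lt: "idx x < d - 1" if "x \<in> set ?r" for x
    using inv_into_into[of x "(!) ?r" "{..<length ?r}"] that img rl_length by (auto simp: idx_def)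
  have idx_inv: "?r ! idx x = x" if "x \<in> set ?r" for x
    using f_inv_into_f[of x "(!) ?r" "{..<length ?r}"] that img by (auto simp: idx_def)
  have idx_inj: "inj_on idx (set ?r)" unfolding idx_def using img by (intro inj_on_inv_into) simp
  obtain w1 w2 where w12: "w = w1 @ [a, b] @ w2" using adjw by (auto simp: adj_def)
  have wd: "distinct w" "length w = Suc d" "set w \<subseteq> {0..<Suc d}" using w by (auto simp: PW_iff)
  have r1: "set w1 \<subseteq> set ?r" and r2: "set w2 \<subseteq> set ?r" using wd w12 by (auto simp: rl_set)
  have dis: "distinct w1" "distinct w2" "set w1 \<inter> set w2 = {}" using wd w12 by auto
  define u where "u = map idx w1 @ (d - 1) # map idx w2"
  have su1: "set (map idx w1) \<subseteq> {0..<d-1}" and su2: "set (map idx w2) \<subseteq> {0..<d-1}"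
    using r1 r2 idx_lt by auto
  have back1: "map ((!) ?r) (map idx w1) = w1" unfolding map_map by (rule map_idI) (use r1 idx_inv in auto)
  have back2: "map ((!) ?r) (map idx w2) = w2" unfolding map_map by (rule map_idI) (use r2 idx_inv in auto)
  have "?s (d - 1) = [a, b]" by (simp add: sab_def)
  then have c: "conc ?s u = w"
    unfolding u_def using conc_small[OF su1] conc_small[OF su2] back1 back2 w12 by (simp add: conc_def)
  have dm1: "distinct (map idx w1)" using dis r1 idx_inj by (simp add: distinct_map inj_on_subset)
  have dm2: "distinct (map idx w2)" using dis r2 idx_inj by (simp add: distinct_map inj_on_subset)
  have dj: "set (map idx w1) \<inter> set (map idx w2) = {}"
  proof -
    have "idx ` set w1 \<inter> idx ` set w2 = idx ` (set w1 \<inter> set w2)"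
      using idx_inj r1 r2 by (simp add: inj_on_image_Int)
    then show ?thesis using dis by simp
  qed
  have "distinct u" unfolding u_def using dm1 dm2 dj su1 su2 by auto
  moreover have "length u = d" unfolding u_def using wd w12 by simp
  moreover have "set u \<subseteq> {0..<d}" unfolding u_def using su1 su2 d1 by auto
  ultimately have "u \<in> PW d" by (simp add: PW_iff)
  with c show ?thesis by blast
qed


lemma subst_symS:
  "subst (sab d a b) (symS d (Xv :: nat \<Rightarrow> nat list \<Rightarrow> 'k::field)) =
     (\<lambda>w. if w \<in> PW (Suc d) \<and> adj a b w then (1::'k) else 0)"
proof
  fix w
  let ?s = "sab d a b"
  have "subst ?s (symS d (Xv :: nat \<Rightarrow> nat list \<Rightarrow> 'k)) w =
        (\<Sum>u\<in>PW d. if conc ?s u = w then (if u \<in> PW d then (1::'k) else 0) else 0)"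
    unfolding symS_Xv[OF d1] by (rule subst_sum[OF finite_PW]) (auto simp: supp_def)
  also have "\<dots> = (\<Sum>u\<in>PW d. if conc ?s u = w then (1::'k) else 0)"
    by (rule sum.cong) auto
  also have "\<dots> = (if w \<in> PW (Suc d) \<and> adj a b w then 1 else 0)"
  proof (cases "w \<in> PW (Suc d) \<and> adj a b w")
    case True
    then obtain u0 where u0: "u0 \<in> PW d" "conc ?s u0 = w" using img_sup by blast
    have "(conc ?s u = w) \<longleftrightarrow> u = u0" if "u \<in> PW d" for u
      using conc_inj[of u u0] that u0 by (auto simp: PW_iff)
    then have "(\<Sum>u\<in>PW d. if conc ?s u = w then (1::'k) else 0) = (\<Sum>u\<in>PW d. if u = u0 then 1 else 0)"
      by (intro sum.cong) auto
    also have "\<dots> = 1" using u0 finite_PW by (simp add: sum.delta')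
    finally show ?thesis using True by simp
  next
    case False
    then have "conc ?s u \<noteq> w" if "u \<in> PW d" for u using img_sub[OF that] by auto
    then show ?thesis using False by simp
  qed
  finally show "subst ?s (symS d (Xv :: nat \<Rightarrow> nat list \<Rightarrow> 'k)) w = (if w \<in> PW (Suc d) \<and> adj a b w then 1 else 0)" .
qed

end



lemma adj_iff:
  assumes "length w = Suc d"
  shows "adj a b w \<longleftrightarrow> (\<exists>i<d. w ! i = a \<and> w ! Suc i = b)"
proof
  assume "adj a b w"
  then obtain w1 w2 where w: "w = w1 @ [a, b] @ w2" by (auto simp: adj_def)
  then have "length w1 < d" using assms by simp
  moreover have "w ! length w1 = a" "w ! Suc (length w1) = b" using w by (auto simp: nth_append)
  ultimately show "\<exists>i<d. w ! i = a \<and> w ! Suc i = b" by blast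
next
  assume "\<exists>i<d. w ! i = a \<and> w ! Suc i = b"
  then obtain i where i: "i < d" "w ! i = a" "w ! Suc i = b" by blast
  have "w = take i w @ drop i w" by simp
  also have "drop i w = w ! i # drop (Suc i) w" by (rule Cons_nth_drop_Suc[symmetric]) (use i assms in simp)
  also have "drop (Suc i) w = w ! Suc i # drop (Suc (Suc i)) w" by (rule Cons_nth_drop_Suc[symmetric]) (use i assms in simp)
  finally have "w = take i w @ [a, b] @ drop (Suc (Suc i)) w" using i by simp
  then show "adj a b w" unfolding adj_def by blast
qed

lemma tspace_sum:
  assumes V: "tspace V" and A: "finite A"
  shows "(\<forall>x\<in>A. f x \<in> V) \<Longrightarrow> (\<lambda>w. \<Sum>x\<in>A. f x w) \<in> V"
  using A
proof (induction A rule: finite_induct)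
  case empty
  then show ?case using V by (simp add: tspace_def)
next
  case (insert x F)
  have "(\<lambda>w. \<Sum>y\<in>insert x F. f y w) = padd (f x) (\<lambda>w. \<Sum>y\<in>F. f y w)"
    using insert.hyps by (simp add: padd_def)
  moreover have "f x \<in> V" "(\<lambda>w. \<Sum>y\<in>F. f y w) \<in> V" using insert by auto
  ultimately show ?case using V by (simp add: tspace_def)
qed

theorem corollary2p3:
  fixes d :: nat
  assumes "d \<ge> 1"
  shows "psmult (of_nat d) (symS (Suc d) (Xv :: nat \<Rightarrow> nat list \<Rightarrow> 'k::field))
           \<in> tspace_gen {symS d (Xv :: nat \<Rightarrow> nat list \<Rightarrow> 'k)}"
proof -
  define Pairs where "Pairs = {p :: nat \<times> nat. fst p < Suc d \<and> snd p < Suc d \<and> fst p \<noteq> snd p}"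
  have fP: "finite Pairs"
    by (rule finite_subset[of _ "{0..<Suc d} \<times> {0..<Suc d}"]) (auto simp: Pairs_def)
  let ?S = "symS d (Xv :: nat \<Rightarrow> nat list \<Rightarrow> 'k)"
  have sP: "subst (sab d (fst p) (snd p)) ?S = (\<lambda>w. if w \<in> PW (Suc d) \<and> adj (fst p) (snd p) w then (1::'k) else 0)"
    if "p \<in> Pairs" for p
    using subst_symS[of d "fst p" "snd p"] that assms by (auto simp: Pairs_def)
  have key: "psmult (of_nat d) (symS (Suc d) (Xv :: nat \<Rightarrow> nat list \<Rightarrow> 'k)) =
      (\<lambda>w. \<Sum>p\<in>Pairs. subst (sab d (fst p) (snd p)) ?S w)"
  proof
    fix w
    have "(\<Sum>p\<in>Pairs. subst (sab d (fst p) (snd p)) ?S w) =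
          (\<Sum>p\<in>Pairs. if w \<in> PW (Suc d) \<and> adj (fst p) (snd p) w then (1::'k) else 0)"
      by (rule sum.cong) (auto simp: sP)
    also have "\<dots> = (if w \<in> PW (Suc d) then of_nat d else 0)"
    proof (cases "w \<in> PW (Suc d)")
      case True
      then have wd: "distinct w" "length w = Suc d" "set w \<subseteq> {0..<Suc d}" by (auto simp: PW_iff)
      have set_eq: "{p \<in> Pairs. adj (fst p) (snd p) w} = (\<lambda>i. (w ! i, w ! Suc i)) ` {..<d}"
      proof
        show "{p \<in> Pairs. adj (fst p) (snd p) w} \<subseteq> (\<lambda>i. (w ! i, w ! Suc i)) ` {..<d}"
          using adj_iff[OF wd(2)] by force
        show "(\<lambda>i. (w ! i, w ! Suc i)) ` {..<d} \<subseteq> {p \<in> Pairs. adj (fst p) (snd p) w}"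
        proof
          fix p assume "p \<in> (\<lambda>i. (w ! i, w ! Suc i)) ` {..<d}"
          then obtain i where i: "i < d" "p = (w ! i, w ! Suc i)" by blast
          have "w ! i \<in> set w" "w ! Suc i \<in> set w" using i wd by auto
          then have "w ! i < Suc d" "w ! Suc i < Suc d" using wd by auto
          moreover have "w ! i \<noteq> w ! Suc i" using wd i by (simp add: nth_eq_iff_index_eq)
          moreover have "adj (w ! i) (w ! Suc i) w" using adj_iff[OF wd(2)] i by blast
          ultimately show "p \<in> {p \<in> Pairs. adj (fst p) (snd p) w}" using i by (simp add: Pairs_def)
        qed
      qed
      have inj: "inj_on (\<lambda>i. (w ! i, w ! Suc i)) {..<d}"
        using wd by (auto simp: inj_on_def nth_eq_iff_index_eq)
      have "(\<Sum>p\<in>Pairs. if w \<in> PW (Suc d) \<and> adj (fst p) (snd p) w then (1::'k) else 0) =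
            (\<Sum>p\<in>{p \<in> Pairs. adj (fst p) (snd p) w}. 1)"
        by (subst sum.inter_filter[OF fP]) (simp add: True)
      also have "\<dots> = of_nat d" by (simp add: set_eq card_image[OF inj])
      finally show ?thesis using True by simp
    next
      case False
      then show ?thesis by simp
    qed
    also have "\<dots> = psmult (of_nat d) (symS (Suc d) (Xv :: nat \<Rightarrow> nat list \<Rightarrow> 'k)) w"
      by (simp add: psmult_def symS_Xv)
    finally show "psmult (of_nat d) (symS (Suc d) (Xv :: nat \<Rightarrow> nat list \<Rightarrow> 'k)) w =
      (\<Sum>p\<in>Pairs. subst (sab d (fst p) (snd p)) ?S w)" by simp
  qed
  show ?thesis
    unfolding tspace_gen_def
  proof
    fix V assume "V \<in> {V. tspace V \<and> {?S} \<subseteq> V}"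
    then have V: "tspace V" "?S \<in> V" by auto
    have "subst (sab d (fst p) (snd p)) ?S \<in> V" if "p \<in> Pairs" for p
    proof -
      have "alg_endo (subst (sab d (fst p) (snd p)) :: (nat list \<Rightarrow> 'k) \<Rightarrow> _)"
        by (rule subst_endo) (simp add: sab_def)
      then show ?thesis using V by (simp add: tspace_def)
    qed
    then show "psmult (of_nat d) (symS (Suc d) Xv) \<in> V"
      unfolding key by (intro tspace_sum[OF V(1) fP]) auto
  qed
qed


end
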